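(* Let $\Delta$ be a tree with vertices $x_1,\ldots,x_n$, let $k$ be a field, and let $I=\mathcal{F}(\Delta)$ be its facet ideal in $R=k[x_1,\ldots,x_n]$. Then for any prime ideal $p$ of $R$, the facet complex $\Delta_{\mathcal{F}}(I_p)$ is a forest.
   Context: A simplicial complex on a vertex set $V$ is a collection of subsets of $V$ containing all singletons and closed under subsets; its facets are its maximal faces. Vertices are identified with variables. The facet ideal $\mathcal{F}(\Delta)$ is generated by the monomials $\prod_{x_j\in F}x_j$, $F$ a facet. If $I=(M_1,\ldots,M_q)$ with square-free monomials $M_i$, then $I_p$ is generated by the monomials $M_i'$ obtained from $M_i$ by deleting all variables not in $p$ (which are units in $R_p$); the facet complex $\Delta_{\mathcal{F}}(I_p)$ is the simplicial complex whose facets are the supports $\{x_j : x_j\mid M_i'\}$ of the minimal ones among the monomials $M_1',\ldots,M_q'$. A subcomplex of $\Delta$ is a simplicial complex whose facet set is a subset of the facet set of $\Delta$. $\Delta$ is connected if any two facets are joined by a chain of facets with consecutive members intersecting. A facet $F$ is a leaf of $\Delta$ if either $F$ is the only facet, or there is a facet $G\neq F$ with $F\cap F'\subseteq F\cap G$ for every facet $F'\neq F$. A connected $\Delta$ is a tree if every nonempty subcomplex has a leaf. A simplicial complex is a forest if every nonempty subcomplex has a leaf (equivalently, every connected component is a tree). *)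

theory Defs
  imports Main
begin

text \<open>A simplicial complex is represented by its set of facets (a finite antichain of
finite nonempty vertex sets); its vertex set is the union of the facets.
Vertices are identified with the variables of the polynomial ring.\<close>

definition facet_set :: "'a set set \<Rightarrow> bool" where
  "facet_set Fs \<longleftrightarrow> finite Fs \<and> (\<forall>F\<in>Fs. finite F \<and> F \<noteq> {}) \<and>
     (\<forall>F\<in>Fs. \<forall>G\<in>Fs. F \<subseteq> G \<longrightarrow> F = G)"

definition is_leaf :: "'a set set \<Rightarrow> 'a set \<Rightarrow> bool" where
  "is_leaf Fs F \<longleftrightarrow> F \<in> Fs \<and>
     (Fs = {F} \<or> (\<exists>G\<in>Fs. G \<noteq> F \<and> (\<forall>F'\<in>Fs. F' \<noteq> F \<longrightarrow> F \<inter> F' \<subseteq> F \<inter> G)))"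

definition connected_cx :: "'a set set \<Rightarrow> bool" where
  "connected_cx Fs \<longleftrightarrow>
     (\<forall>F\<in>Fs. \<forall>G\<in>Fs. (\<lambda>A B. A \<in> Fs \<and> B \<in> Fs \<and> A \<inter> B \<noteq> {})\<^sup>*\<^sup>* F G)"

definition is_forest :: "'a set set \<Rightarrow> bool" where
  "is_forest Fs \<longleftrightarrow> (\<forall>Gs. Gs \<subseteq> Fs \<and> Gs \<noteq> {} \<longrightarrow> (\<exists>F. is_leaf Gs F))"

definition is_tree :: "'a set set \<Rightarrow> bool" where
  "is_tree Fs \<longleftrightarrow> connected_cx Fs \<and> is_forest Fs"

text \<open>Facet complex of the localization \<open>I_p\<close> of the facet ideal, where P is the set of
variables lying in the prime p: each generator \<open>\<Prod>x\<in>F. x\<close> becomes \<open>\<Prod>x\<in>F\<inter>P. x\<close>,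
and the facets are the supports of the minimal (w.r.t. divisibility, i.e. inclusion
of supports) among these monomials.\<close>
definition loc_facets :: "'a set set \<Rightarrow> 'a set \<Rightarrow> 'a set set" where
  "loc_facets Fs P = {A \<in> (\<lambda>F. F \<inter> P) ` Fs.
      \<forall>B \<in> (\<lambda>F. F \<inter> P) ` Fs. B \<subseteq> A \<longrightarrow> B = A}"

end

theory Submission
  imports Defs
begin

theorem mainTheorem5:
  fixes Fs :: "'a set set" and P :: "'a set"
  assumes "facet_set Fs"
    and "is_tree Fs"
    and "P \<subseteq> \<Union>Fs"
  shows "is_forest (loc_facets Fs P)"
  unfolding is_forest_def
proof (intro allI impI)
  fix Gs assume Gs: "Gs \<subseteq> loc_facets Fs P \<and> Gs \<noteq> {}"
  have forest: "is_forest Fs" using assms(2) by (simp add: is_tree_def)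
  have sub: "\<And>A. A \<in> Gs \<Longrightarrow> \<exists>F\<in>Fs. F \<inter> P = A"
    using Gs unfolding loc_facets_def by auto
  define f where "f A = (SOME F. F \<in> Fs \<and> F \<inter> P = A)" for A
  have f: "\<And>A. A \<in> Gs \<Longrightarrow> f A \<in> Fs \<and> f A \<inter> P = A"
    unfolding f_def by (rule someI_ex) (use sub in blast)
  define Hs where "Hs = f ` Gs"
  have "Hs \<subseteq> Fs \<and> Hs \<noteq> {}" using f Gs unfolding Hs_def by auto
  then obtain H where H: "is_leaf Hs H" using forest unfolding is_forest_def by meson
  then obtain A0 where A0: "A0 \<in> Gs" "H = f A0" unfolding is_leaf_def Hs_def by auto
  have "is_leaf Gs A0"
    unfolding is_leaf_def
  proof (intro conjI)
    show "A0 \<in> Gs" by fact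
    from H consider "Hs = {H}" | G where "G \<in> Hs" "G \<noteq> H"
        "\<forall>F'\<in>Hs. F' \<noteq> H \<longrightarrow> H \<inter> F' \<subseteq> H \<inter> G"
      unfolding is_leaf_def by blast
    then show "Gs = {A0} \<or> (\<exists>G\<in>Gs. G \<noteq> A0 \<and> (\<forall>F'\<in>Gs. F' \<noteq> A0 \<longrightarrow> A0 \<inter> F' \<subseteq> A0 \<inter> G))"
    proof cases
      case 1
      have "Gs = {A0}"
      proof (rule equalityI)
        show "Gs \<subseteq> {A0}"
        proof
          fix A assume "A \<in> Gs"
          then have "f A \<in> Hs" unfolding Hs_def by (rule imageI)
          then have "f A = f A0" using 1 A0 by simp
          have "A = f A \<inter> P" using f[OF \<open>A \<in> Gs\<close>] by (rule sym[OF conjunct2])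
          also have "... = f A0 \<inter> P" using \<open>f A = f A0\<close> by (rule arg_cong)
          also have "... = A0" using f[OF A0(1)] by (rule conjunct2)
          finally show "A \<in> {A0}" by simp
        qed
      next
        show "{A0} \<subseteq> Gs" using A0(1) by simp
      qed
      then show ?thesis by (rule disjI1)
    next
      case 2
      then obtain B where B: "B \<in> Gs" "G = f B" unfolding Hs_def by blast
      have eA0: "H \<inter> P = A0" using f[OF A0(1)] A0(2) by simp
      have eB: "G \<inter> P = B" using f[OF B(1)] B(2) by simp
      have "B \<noteq> A0"
      proof
        assume "B = A0"
        then have "G = H" using A0(2) B(2) by simp
        then show False using 2(2) by simp
      qed
      moreover have "\<forall>F'\<in>Gs. F' \<noteq> A0 \<longrightarrow> A0 \<inter> F' \<subseteq> A0 \<inter> B"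
      proof (intro ballI impI)
        fix A assume A: "A \<in> Gs" "A \<noteq> A0"
        have eA: "f A \<inter> P = A" using f[OF A(1)] by (rule conjunct2)
        have "f A \<noteq> H"
        proof
          assume "f A = H"
          then have "f A \<inter> P = H \<inter> P" by simp
          then have "A = A0" by (simp only: eA eA0)
          then show False using A(2) by simp
        qed
        moreover have "f A \<in> Hs" using A(1) unfolding Hs_def by (rule imageI)
        ultimately have X: "H \<inter> f A \<subseteq> H \<inter> G" using 2(3) by blast
        have "H \<inter> P \<inter> (f A \<inter> P) \<subseteq> H \<inter> P \<inter> (G \<inter> P)" using X by blast
        then show "A0 \<inter> A \<subseteq> A0 \<inter> B" by (simp only: eA eA0 eB)
      qed
      ultimately show ?thesis using B by blast
    qed
  qed
  then show "\<exists>F. is_leaf Gs F" by blast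
qed

end
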